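(* Let $G$ be a connected graph and let $r\le r'$ be natural numbers. Let $q_{r,r'}:G_r\to G_{r'}$ be a covering with $p_r=p_{r'}\circ q_{r,r'}$, and let $p_{r,r'}:(G_{r'})_r\to G_{r'}$ be the $r$-local covering of $G_{r'}$. Then $p_{r,r'}$ and $q_{r,r'}$ are equivalent coverings of $G_{r'}$, and $p_r$ and $p_{r'}\circ p_{r,r'}$ are equivalent coverings of $G$. In particular, $(G_{r'})_r$ and $G_r$ are isomorphic graphs.
   Context: Graphs may have loops and parallel edges and are viewed as 1-complexes; covering spaces are connected. A cycle may be a loop or a pair of parallel edges; a closed walk once around a cycle $O$ traverses every edge of $O$ exactly once. For a connected graph $X$, a vertex $x_0$ and $s\in\mathbb{N}$, $\pi_1^s(X,x_0)$ is the subgroup of $\pi_1(X,x_0)$ generated by the classes of closed walks $W_0QW_0^-$, $W_0$ a walk from $x_0$ to a vertex $y$, $Q$ a closed walk at $y$ once around a cycle of length at most $s$, $W_0^-$ the reverse of $W_0$. The $s$-local covering $p_s:X_s\to X$ is the connected normal covering with characteristic subgroup $\pi_1^s(X,x_0)$. (A covering $q_{r,r'}$ as in the claim exists, and is unique up to equivalence.) Two coverings $q:X\to Y$, $q':X'\to Y$ are equivalent if there is a homeomorphism $h:X\to X'$ with $q'\circ h=q$. *)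

theory Defs
  imports Main
begin

text \<open>Graphs (loops and parallel edges allowed) are encoded combinatorially by darts
  (oriented edges): every edge contributes two darts exchanged by the fixed-point-free
  involution dinv; orig gives the initial vertex of a dart.  This is the standard
  combinatorial model of a 1-complex, and topological coverings of the 1-complex
  correspond to the combinatorial coverings defined below.\<close>

record ('v, 'd) graph =
  verts :: "'v set"
  darts :: "'d set"
  dinv  :: "'d \<Rightarrow> 'd"
  orig  :: "'d \<Rightarrow> 'v"

definition tgt :: "('v, 'd) graph \<Rightarrow> 'd \<Rightarrow> 'v" where
  "tgt X d = orig X (dinv X d)"

definition wf_graph :: "('v, 'd) graph \<Rightarrow> bool" where
  "wf_graph X \<longleftrightarrow>
     (\<forall>d\<in>darts X. orig X d \<in> verts X \<and> dinv X d \<in> darts X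
                   \<and> dinv X (dinv X d) = d \<and> dinv X d \<noteq> d)"

definition walk :: "('v, 'd) graph \<Rightarrow> 'v \<Rightarrow> 'v \<Rightarrow> 'd list \<Rightarrow> bool" where
  "walk X x y W \<longleftrightarrow>
     x \<in> verts X \<and> y \<in> verts X \<and> set W \<subseteq> darts X \<and>
     (W = [] \<longrightarrow> x = y) \<and>
     (W \<noteq> [] \<longrightarrow> orig X (hd W) = x \<and> tgt X (last W) = y) \<and>
     (\<forall>i. Suc i < length W \<longrightarrow> tgt X (W ! i) = orig X (W ! Suc i))"

definition rwalk :: "('v, 'd) graph \<Rightarrow> 'd list \<Rightarrow> 'd list" where
  "rwalk X W = rev (map (dinv X) W)"

definition connected_graph :: "('v, 'd) graph \<Rightarrow> bool" where
  "connected_graph X \<longleftrightarrow> verts X \<noteq> {} \<and> (\<forall>x\<in>verts X. \<forall>y\<in>verts X. \<exists>W. walk X x y W)"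

text \<open>A closed walk once around a cycle (a loop, a pair of parallel edges, or a cycle of
  length at least 3): a nonempty closed walk through pairwise distinct vertices using
  pairwise distinct edges.\<close>
definition cycle_walk :: "('v, 'd) graph \<Rightarrow> 'd list \<Rightarrow> bool" where
  "cycle_walk X Q \<longleftrightarrow> Q \<noteq> [] \<and> walk X (orig X (hd Q)) (orig X (hd Q)) Q \<and>
     distinct (map (orig X) Q) \<and>
     (\<forall>i<length Q. \<forall>j<length Q. i \<noteq> j \<longrightarrow> Q ! i \<noteq> Q ! j \<and> Q ! i \<noteq> dinv X (Q ! j))"

text \<open>pi1s X s x0 W: W is a closed walk at x0 whose homotopy class lies in the subgroup
  pi_1^s(X,x0), i.e. W is homotopic (by insertion/deletion of backtracks) to a product of
  the generators W0 Q W0^- (and their inverses).\<close>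
inductive pi1s :: "('v, 'd) graph \<Rightarrow> nat \<Rightarrow> 'v \<Rightarrow> 'd list \<Rightarrow> bool"
  for X :: "('v, 'd) graph" and s :: nat and x0 :: 'v where
  empty: "x0 \<in> verts X \<Longrightarrow> pi1s X s x0 []"
| gen: "\<lbrakk>pi1s X s x0 W; walk X x0 y W0; cycle_walk X Q; orig X (hd Q) = y; length Q \<le> s\<rbrakk>
        \<Longrightarrow> pi1s X s x0 (W @ W0 @ Q @ rwalk X W0)"
| gen_inv: "\<lbrakk>pi1s X s x0 W; walk X x0 y W0; cycle_walk X Q; orig X (hd Q) = y; length Q \<le> s\<rbrakk>
        \<Longrightarrow> pi1s X s x0 (W @ W0 @ rwalk X Q @ rwalk X W0)"
| del: "pi1s X s x0 (A @ [d, dinv X d] @ B) \<Longrightarrow> pi1s X s x0 (A @ B)"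
| ins: "\<lbrakk>pi1s X s x0 (A @ B); walk X x0 x0 (A @ [d, dinv X d] @ B)\<rbrakk>
        \<Longrightarrow> pi1s X s x0 (A @ [d, dinv X d] @ B)"

type_synonym ('v, 'd, 'w, 'e) gmap = "('v \<Rightarrow> 'w) \<times> ('d \<Rightarrow> 'e)"

definition gcomp :: "('w, 'e, 'u, 'f) gmap \<Rightarrow> ('v, 'd, 'w, 'e) gmap \<Rightarrow> ('v, 'd, 'u, 'f) gmap" where
  "gcomp p q = (fst p \<circ> fst q, snd p \<circ> snd q)"

definition graph_hom :: "('v, 'd) graph \<Rightarrow> ('v, 'd, 'w, 'e) gmap \<Rightarrow> ('w, 'e) graph \<Rightarrow> bool" where
  "graph_hom X h Y \<longleftrightarrow>
     (\<forall>v\<in>verts X. fst h v \<in> verts Y) \<and> (\<forall>d\<in>darts X. snd h d \<in> darts Y) \<and>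
     (\<forall>d\<in>darts X. snd h (dinv X d) = dinv Y (snd h d) \<and> orig Y (snd h d) = fst h (orig X d))"

definition covering :: "('w, 'e) graph \<Rightarrow> ('w, 'e, 'v, 'd) gmap \<Rightarrow> ('v, 'd) graph \<Rightarrow> bool" where
  "covering X' p X \<longleftrightarrow> wf_graph X' \<and> wf_graph X \<and> connected_graph X' \<and>
     graph_hom X' p X \<and> fst p ` verts X' = verts X \<and>
     (\<forall>v\<in>verts X'. bij_betw (snd p) {d\<in>darts X'. orig X' d = v} {d\<in>darts X. orig X d = fst p v})"

text \<open>p is an s-local covering of X: a (connected) covering whose characteristic subgroup
  (classes of closed walks at x0 lifting to closed walks at x0') is pi_1^s(X,x0).\<close>
definition local_covering :: "nat \<Rightarrow> ('w, 'e) graph \<Rightarrow> ('w, 'e, 'v, 'd) gmap \<Rightarrow> ('v, 'd) graph \<Rightarrow> bool" where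
  "local_covering s X' p X \<longleftrightarrow> covering X' p X \<and>
     (\<exists>x0\<in>verts X. \<exists>x0'\<in>verts X'. fst p x0' = x0 \<and>
        (\<forall>W. walk X x0 x0 W \<longrightarrow>
              ((\<exists>W'. walk X' x0' x0' W' \<and> map (snd p) W' = W) \<longleftrightarrow> pi1s X s x0 W)))"

definition graph_iso :: "('v, 'd) graph \<Rightarrow> ('v, 'd, 'w, 'e) gmap \<Rightarrow> ('w, 'e) graph \<Rightarrow> bool" where
  "graph_iso X h Y \<longleftrightarrow> graph_hom X h Y \<and> bij_betw (fst h) (verts X) (verts Y) \<and>
     bij_betw (snd h) (darts X) (darts Y)"

definition isomorphic_graphs :: "('v, 'd) graph \<Rightarrow> ('w, 'e) graph \<Rightarrow> bool" where
  "isomorphic_graphs X Y \<longleftrightarrow> (\<exists>h. graph_iso X h Y)"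

definition equivalent_coverings ::
  "('v, 'd) graph \<Rightarrow> ('v, 'd, 'u, 'f) gmap \<Rightarrow> ('w, 'e) graph \<Rightarrow> ('w, 'e, 'u, 'f) gmap \<Rightarrow> bool" where
  "equivalent_coverings X q X' q' \<longleftrightarrow>
     (\<exists>h. graph_iso X h X' \<and> (\<forall>v\<in>verts X. fst q' (fst h v) = fst q v) \<and>
          (\<forall>d\<in>darts X. snd q' (snd h d) = snd q d))"

end

theory Submission
  imports Defs
begin

lemma walk_verts: "walk X x y W \<Longrightarrow> x \<in> verts X \<and> y \<in> verts X"
  by (simp add: walk_def)

lemma walk_darts: "walk X x y W \<Longrightarrow> set W \<subseteq> darts X"
  by (simp add: walk_def)

lemma walk_Nil[simp]: "walk X x y [] \<longleftrightarrow> x \<in> verts X \<and> x = y"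
  by (auto simp: walk_def)

lemma tgt_in: "wf_graph X \<Longrightarrow> d \<in> darts X \<Longrightarrow> tgt X d \<in> verts X"
  by (simp add: wf_graph_def tgt_def)

lemma walk_Cons: "wf_graph X \<Longrightarrow> walk X x y (d#W) \<longleftrightarrow>
   x \<in> verts X \<and> d \<in> darts X \<and> orig X d = x \<and> walk X (tgt X d) y W"
proof -
  assume wf: "wf_graph X"
  have idx: "(\<forall>i. Suc i < length (d#W) \<longrightarrow> tgt X ((d#W)!i) = orig X ((d#W)!Suc i)) \<longleftrightarrow>
     (W \<noteq> [] \<longrightarrow> tgt X d = orig X (hd W)) \<and> (\<forall>i. Suc i < length W \<longrightarrow> tgt X (W!i) = orig X (W!Suc i))"
  proof
    assume H: "\<forall>i. Suc i < length (d#W) \<longrightarrow> tgt X ((d#W)!i) = orig X ((d#W)!Suc i)"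
    show "(W \<noteq> [] \<longrightarrow> tgt X d = orig X (hd W)) \<and> (\<forall>i. Suc i < length W \<longrightarrow> tgt X (W!i) = orig X (W!Suc i))"
    proof (intro conjI allI impI)
      assume "W \<noteq> []" then show "tgt X d = orig X (hd W)" using H[rule_format, of 0] by (simp add: hd_conv_nth)
    next
      fix i assume "Suc i < length W" then show "tgt X (W!i) = orig X (W!Suc i)" using H[rule_format, of "Suc i"] by simp
    qed
  next
    assume H: "(W \<noteq> [] \<longrightarrow> tgt X d = orig X (hd W)) \<and> (\<forall>i. Suc i < length W \<longrightarrow> tgt X (W!i) = orig X (W!Suc i))"
    show "\<forall>i. Suc i < length (d#W) \<longrightarrow> tgt X ((d#W)!i) = orig X ((d#W)!Suc i)"
    proof (intro allI impI)
      fix i assume "Suc i < length (d#W)"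
      then show "tgt X ((d#W)!i) = orig X ((d#W)!Suc i)" using H
        by (cases i) (auto simp: hd_conv_nth)
    qed
  qed
  show ?thesis
    unfolding walk_def idx using tgt_in[OF wf, of d]
    by (cases W) auto
qed

lemma walk_append: "wf_graph X \<Longrightarrow> walk X x z (A@B) \<longleftrightarrow> (\<exists>y. walk X x y A \<and> walk X y z B)"
proof (induction A arbitrary: x)
  case Nil
  then show ?case using walk_verts by fastforce
next
  case (Cons d A)
  then show ?case by (simp add: walk_Cons)
qed

lemma walk_end_unique: "walk X x y W \<Longrightarrow> walk X x z W \<Longrightarrow> y = z"
  by (cases "W = []") (auto simp: walk_def)

lemma walk_start_unique: "walk X x y W \<Longrightarrow> walk X z y W \<Longrightarrow> x = z"
  by (cases "W = []") (auto simp: walk_def)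

lemma rwalk_Nil[simp]: "rwalk X [] = []" by (simp add: rwalk_def)
lemma rwalk_Cons: "rwalk X (d#W) = rwalk X W @ [dinv X d]" by (simp add: rwalk_def)
lemma rwalk_append: "rwalk X (A@B) = rwalk X B @ rwalk X A" by (simp add: rwalk_def)
lemma length_rwalk[simp]: "length (rwalk X W) = length W" by (simp add: rwalk_def)

lemma rwalk_rwalk: "wf_graph X \<Longrightarrow> set W \<subseteq> darts X \<Longrightarrow> rwalk X (rwalk X W) = W"
  by (induction W) (auto simp: rwalk_def wf_graph_def)

lemma walk_rev: "wf_graph X \<Longrightarrow> walk X x y W \<Longrightarrow> walk X y x (rwalk X W)"
proof (induction W arbitrary: x)
  case Nil then show ?case by auto
next
  case (Cons d W)
  then have w: "x \<in> verts X" "d \<in> darts X" "orig X d = x" "walk X (tgt X d) y W" by (auto simp: walk_Cons)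
  have "walk X (tgt X d) x [dinv X d]" using Cons.prems(1) w
    by (auto simp: walk_Cons tgt_def wf_graph_def)
  with Cons.IH[OF Cons.prems(1) w(4)] show ?case
    by (auto simp: rwalk_Cons walk_append[OF Cons.prems(1)])
qed

lemma hom_tgt: "graph_hom X' p X \<Longrightarrow> wf_graph X' \<Longrightarrow> d \<in> darts X' \<Longrightarrow> fst p (tgt X' d) = tgt X (snd p d)"
proof -
  assume h: "graph_hom X' p X" and wf: "wf_graph X'" and d: "d \<in> darts X'"
  have dd: "dinv X' d \<in> darts X'" using wf d by (simp add: wf_graph_def)
  have "orig X (snd p (dinv X' d)) = fst p (orig X' (dinv X' d))" using h dd by (simp add: graph_hom_def)
  moreover have "snd p (dinv X' d) = dinv X (snd p d)" using h d by (simp add: graph_hom_def)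
  ultimately show ?thesis by (simp add: tgt_def)
qed

lemma hom_walk: "graph_hom X' p X \<Longrightarrow> wf_graph X' \<Longrightarrow> wf_graph X \<Longrightarrow> walk X' x y W \<Longrightarrow>
   walk X (fst p x) (fst p y) (map (snd p) W)"
proof (induction W arbitrary: x)
  case Nil then show ?case by (auto simp: graph_hom_def)
next
  case (Cons d W)
  then have w: "x \<in> verts X'" "d \<in> darts X'" "orig X' d = x" "walk X' (tgt X' d) y W"
    by (auto simp: walk_Cons)
  have "walk X (fst p (tgt X' d)) (fst p y) (map (snd p) W)" using Cons w by blast
  then have "walk X (tgt X (snd p d)) (fst p y) (map (snd p) W)" using hom_tgt[OF Cons.prems(1,2) w(2)] by simp
  then show ?case using w Cons.prems(1) by (auto simp: walk_Cons[OF Cons.prems(3)] graph_hom_def)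
qed

lemma hom_rwalk: "graph_hom X' p X \<Longrightarrow> set W \<subseteq> darts X' \<Longrightarrow> map (snd p) (rwalk X' W) = rwalk X (map (snd p) W)"
  by (induction W) (auto simp: rwalk_Cons graph_hom_def)

definition liftd :: "('w, 'e) graph \<Rightarrow> ('w, 'e, 'v, 'd) gmap \<Rightarrow> 'w \<Rightarrow> 'd \<Rightarrow> 'e" where
  "liftd X' p v d = (THE d'. d' \<in> darts X' \<and> orig X' d' = v \<and> snd p d' = d)"

lemma cov_wf: "covering X' p X \<Longrightarrow> wf_graph X' \<and> wf_graph X \<and> graph_hom X' p X"
  by (simp add: covering_def)

lemma cov_inj_at: "covering X' p X \<Longrightarrow> d1 \<in> darts X' \<Longrightarrow> d2 \<in> darts X' \<Longrightarrow>
   orig X' d1 = orig X' d2 \<Longrightarrow> snd p d1 = snd p d2 \<Longrightarrow> d1 = d2"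
proof -
  assume c: "covering X' p X" and d: "d1 \<in> darts X'" "d2 \<in> darts X'" "orig X' d1 = orig X' d2" "snd p d1 = snd p d2"
  have v: "orig X' d1 \<in> verts X'" using c d by (simp add: covering_def wf_graph_def)
  then have "inj_on (snd p) {d\<in>darts X'. orig X' d = orig X' d1}"
    using c by (simp add: covering_def bij_betw_def)
  then show ?thesis using d by (auto dest: inj_onD)
qed

lemma cov_liftd: "covering X' p X \<Longrightarrow> v \<in> verts X' \<Longrightarrow> d \<in> darts X \<Longrightarrow> orig X d = fst p v \<Longrightarrow>
   liftd X' p v d \<in> darts X' \<and> orig X' (liftd X' p v d) = v \<and> snd p (liftd X' p v d) = d"
proof -
  assume c: "covering X' p X" and v: "v \<in> verts X'" and d: "d \<in> darts X" "orig X d = fst p v"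
  have bij: "bij_betw (snd p) {d\<in>darts X'. orig X' d = v} {d\<in>darts X. orig X d = fst p v}"
    using c v unfolding covering_def by blast
  have "d \<in> {d\<in>darts X. orig X d = fst p v}" using d by simp
  then have "d \<in> snd p ` {d\<in>darts X'. orig X' d = v}" using bij by (simp add: bij_betw_def)
  then obtain d' where d'x: "d' \<in> {d\<in>darts X'. orig X' d = v}" and d'e: "d = snd p d'" by (rule imageE)
  then have d': "d' \<in> darts X'" "orig X' d' = v" "snd p d' = d" by auto
  have "\<exists>!d'. d' \<in> darts X' \<and> orig X' d' = v \<and> snd p d' = d"
  proof (rule ex1I[of _ d'])
    show "d' \<in> darts X' \<and> orig X' d' = v \<and> snd p d' = d" using d' by simp
  next
    fix x assume x: "x \<in> darts X' \<and> orig X' x = v \<and> snd p x = d"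
    show "x = d'" using cov_inj_at[OF c, of x d'] x d' by simp
  qed
  then show ?thesis unfolding liftd_def by (rule theI')
qed

lemma cov_liftd_unique: "covering X' p X \<Longrightarrow> d' \<in> darts X' \<Longrightarrow> liftd X' p (orig X' d') (snd p d') = d'"
proof -
  assume c: "covering X' p X" and d: "d' \<in> darts X'"
  have "orig X' d' \<in> verts X'" using c d by (simp add: covering_def wf_graph_def)
  moreover have "snd p d' \<in> darts X" "orig X (snd p d') = fst p (orig X' d')"
    using c d by (auto simp: covering_def graph_hom_def)
  ultimately have L: "liftd X' p (orig X' d') (snd p d') \<in> darts X'"
     "orig X' (liftd X' p (orig X' d') (snd p d')) = orig X' d'"
     "snd p (liftd X' p (orig X' d') (snd p d')) = snd p d'"
    using cov_liftd[OF c] by auto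
  show ?thesis by (rule cov_inj_at[OF c L(1) d L(2) L(3)])
qed

lemma lift_exists: "covering X' p X \<Longrightarrow> v \<in> verts X' \<Longrightarrow> walk X (fst p v) y W \<Longrightarrow>
   \<exists>W' y'. walk X' v y' W' \<and> map (snd p) W' = W \<and> fst p y' = y"
proof (induction W arbitrary: v)
  case Nil then show ?case by auto
next
  case (Cons d W)
  have wf: "wf_graph X'" "wf_graph X" "graph_hom X' p X" using cov_wf[OF Cons.prems(1)] by auto
  have w: "d \<in> darts X" "orig X d = fst p v" "walk X (tgt X d) y W"
    using Cons.prems(3) by (auto simp: walk_Cons[OF wf(2)])
  define d' where "d' = liftd X' p v d"
  have d': "d' \<in> darts X'" "orig X' d' = v" "snd p d' = d"
    using cov_liftd[OF Cons.prems(1,2) w(1,2)] by (auto simp: d'_def)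
  have t: "tgt X' d' \<in> verts X'" using tgt_in[OF wf(1) d'(1)] .
  have "fst p (tgt X' d') = tgt X d" using hom_tgt[OF wf(3,1) d'(1)] d'(3) by simp
  then obtain W' y' where "walk X' (tgt X' d') y' W'" "map (snd p) W' = W" "fst p y' = y"
    using Cons.IH[OF Cons.prems(1) t] w(3) by auto
  then show ?case using d' Cons.prems(2)
    by (intro exI[of _ "d'#W'"] exI[of _ y']) (auto simp: walk_Cons[OF wf(1)])
qed

lemma lift_unique: "covering X' p X \<Longrightarrow> walk X' v a A \<Longrightarrow> walk X' v b B \<Longrightarrow>
   map (snd p) A = map (snd p) B \<Longrightarrow> A = B"
proof (induction A arbitrary: v B)
  case Nil then show ?case by simp
next
  case (Cons d A)
  have wf: "wf_graph X'" using cov_wf[OF Cons.prems(1)] by auto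
  obtain e B' where B: "B = e # B'" using Cons.prems(4) by (cases B) auto
  have d: "d \<in> darts X'" "orig X' d = v" and wA: "walk X' (tgt X' d) a A"
    using Cons.prems(2) by (auto simp: walk_Cons[OF wf])
  have e: "e \<in> darts X'" "orig X' e = v" and wB: "walk X' (tgt X' e) b B'"
    using Cons.prems(3) B by (auto simp: walk_Cons[OF wf])
  have pe: "snd p d = snd p e" and m: "map (snd p) A = map (snd p) B'" using Cons.prems(4) B by auto
  have de: "d = e" using cov_inj_at[OF Cons.prems(1) d(1) e(1)] d(2) e(2) pe by simp
  have wB': "walk X' (tgt X' d) b B'" using wB de by simp
  have "A = B'" by (rule Cons.IH[OF Cons.prems(1) wA wB' m])
  then show ?case using B de by simp
qed

lemma lift_unique_end: "covering X' p X \<Longrightarrow> walk X' a v A \<Longrightarrow> walk X' b v B \<Longrightarrow>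
   map (snd p) A = map (snd p) B \<Longrightarrow> A = B"
proof -
  assume c: "covering X' p X" and A: "walk X' a v A" and B: "walk X' b v B" and m: "map (snd p) A = map (snd p) B"
  have wf: "wf_graph X'" "graph_hom X' p X" using cov_wf[OF c] by auto
  have "map (snd p) (rwalk X' A) = map (snd p) (rwalk X' B)"
    using hom_rwalk[OF wf(2) walk_darts[OF A]] hom_rwalk[OF wf(2) walk_darts[OF B]] m by simp
  then have "rwalk X' A = rwalk X' B"
    using lift_unique[OF c walk_rev[OF wf(1) A] walk_rev[OF wf(1) B]] by simp
  then have "rwalk X' (rwalk X' A) = rwalk X' (rwalk X' B)" by simp
  then show ?thesis using rwalk_rwalk[OF wf(1) walk_darts[OF A]] rwalk_rwalk[OF wf(1) walk_darts[OF B]] by simp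
qed

lemma walk_appI: assumes wf: "wf_graph X" and "walk X x y A" "walk X y z B" shows "walk X x z (A@B)"
  using walk_append[OF wf, of x z A B] assms by blast

lemma walk_appE: assumes wf: "wf_graph X" and "walk X x z (A@B)" and "\<And>y. walk X x y A \<Longrightarrow> walk X y z B \<Longrightarrow> P" shows P
  using walk_append[OF wf, of x z A B] assms by blast

lemma walk_bt_E: "wf_graph X \<Longrightarrow> walk X x y (A@[d,dinv X d]@B) \<Longrightarrow>
   (\<And>a. walk X x a A \<Longrightarrow> walk X a y B \<Longrightarrow> d \<in> darts X \<Longrightarrow> orig X d = a \<Longrightarrow> P) \<Longrightarrow> P"
proof -
  assume wf: "wf_graph X" and w: "walk X x y (A@[d,dinv X d]@B)"
    and R: "\<And>a. walk X x a A \<Longrightarrow> walk X a y B \<Longrightarrow> d \<in> darts X \<Longrightarrow> orig X d = a \<Longrightarrow> P"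
  obtain a where wa: "walk X x a A" and wb: "walk X a y ([d,dinv X d]@B)" using walk_appE[OF wf w] by blast
  then have d: "d \<in> darts X" "orig X d = a" and w2: "walk X (tgt X d) y (dinv X d # B)"
    by (auto simp: walk_Cons[OF wf])
  then have "walk X (tgt X (dinv X d)) y B" by (auto simp: walk_Cons[OF wf])
  moreover have "tgt X (dinv X d) = a" using wf d by (simp add: tgt_def wf_graph_def)
  ultimately show P using R wa d by simp
qed

lemma walk_bt_I: "wf_graph X \<Longrightarrow> walk X x a A \<Longrightarrow> walk X a y B \<Longrightarrow> d \<in> darts X \<Longrightarrow> orig X d = a \<Longrightarrow>
   walk X x y (A@[d,dinv X d]@B)"
proof -
  assume wf: "wf_graph X" and wa: "walk X x a A" and wb: "walk X a y B" and d: "d \<in> darts X" "orig X d = a"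
  have "tgt X (dinv X d) = a" using wf d by (simp add: tgt_def wf_graph_def)
  then have "walk X a y ([d,dinv X d]@B)" using wf d wb walk_verts[OF wb]
    by (simp add: walk_Cons[OF wf] tgt_in wf_graph_def tgt_def)
  then show ?thesis using walk_appI[OF wf wa] by blast
qed

lemma pi1s_walk: assumes wf: "wf_graph X" shows "pi1s X s x W \<Longrightarrow> walk X x x W"
proof (induction rule: pi1s.induct)
  case empty then show ?case by simp
next
  case (gen W y W0 Q)
  have "walk X y y Q" using gen by (simp add: cycle_walk_def)
  then show ?case using walk_appI[OF wf gen.IH walk_appI[OF wf gen.hyps(2) walk_appI[OF wf _ walk_rev[OF wf gen.hyps(2)]]]] by blast
next
  case (gen_inv W y W0 Q)
  have "walk X y y Q" using gen_inv by (simp add: cycle_walk_def)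
  then have "walk X y y (rwalk X Q)" using walk_rev[OF wf] by blast
  then show ?case using walk_appI[OF wf gen_inv.IH walk_appI[OF wf gen_inv.hyps(2) walk_appI[OF wf _ walk_rev[OF wf gen_inv.hyps(2)]]]] by blast
next
  case (del A d B)
  obtain a where "walk X x a A" "walk X a x B" using walk_bt_E[OF wf del.IH] by blast
  then show ?case using walk_appI[OF wf] by blast
next
  case (ins A B d) then show ?case by simp
qed

lemma pi1s_cancel: "pi1s X s x (A @ Q @ rwalk X Q @ B) \<Longrightarrow> pi1s X s x (A@B)"
proof (induction Q arbitrary: A B)
  case Nil then show ?case by simp
next
  case (Cons d Q)
  have "pi1s X s x ((A@[d]) @ Q @ rwalk X Q @ ([dinv X d]@B))"
    using Cons.prems by (simp add: rwalk_Cons)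
  then have "pi1s X s x ((A@[d]) @ ([dinv X d]@B))" by (rule Cons.IH)
  then have "pi1s X s x (A @ [d, dinv X d] @ B)" by simp
  then show ?case by (rule pi1s.del)
qed

lemma pi1s_insert: "wf_graph X \<Longrightarrow> pi1s X s x (A@B) \<Longrightarrow> walk X x a A \<Longrightarrow> walk X a b Q \<Longrightarrow> walk X a x B \<Longrightarrow>
  pi1s X s x (A @ Q @ rwalk X Q @ B)"
proof (induction Q arbitrary: A a B)
  case Nil then show ?case by simp
next
  case (Cons d Q)
  have wf: "wf_graph X" by fact
  have d: "d \<in> darts X" "orig X d = a" and wq: "walk X (tgt X d) b Q" using Cons.prems(4) by (auto simp: walk_Cons[OF wf])
  have w: "walk X x x (A @ [d, dinv X d] @ B)" using walk_bt_I[OF wf Cons.prems(3,5) d] .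
  have p1: "pi1s X s x ((A @ [d]) @ ([dinv X d] @ B))" using pi1s.ins[OF Cons.prems(2) w] by simp
  have wA: "walk X x (tgt X d) (A@[d])" using walk_appI[OF wf Cons.prems(3)] d walk_verts[OF Cons.prems(3)] tgt_in[OF wf d(1)]
    by (simp add: walk_Cons[OF wf])
  have "tgt X (dinv X d) = a" using wf d by (simp add: tgt_def wf_graph_def)
  then have wB: "walk X (tgt X d) x ([dinv X d] @ B)" using Cons.prems(5) d wf tgt_in[OF wf d(1)]
    by (simp add: walk_Cons[OF wf] wf_graph_def tgt_def)
  have "pi1s X s x ((A @ [d]) @ Q @ rwalk X Q @ ([dinv X d] @ B))"
    by (rule Cons.IH[OF wf p1 wA wq wB])
  then show ?case by (simp add: rwalk_Cons)
qed

lemma pi1s_append: assumes wf: "wf_graph X" and U: "pi1s X s x U" shows "pi1s X s x V \<Longrightarrow> pi1s X s x (U@V)"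
proof (induction rule: pi1s.induct)
  case empty then show ?case using U by simp
next
  case (gen W y W0 Q)
  then show ?case using pi1s.gen[of X s x "U@W" y W0 Q] by simp
next
  case (gen_inv W y W0 Q)
  then show ?case using pi1s.gen_inv[of X s x "U@W" y W0 Q] by simp
next
  case (del A d B)
  then show ?case using pi1s.del[of X s x "U@A" d B] by simp
next
  case (ins A B d)
  have "walk X x x U" using pi1s_walk[OF wf U] .
  then have "walk X x x (U @ A @ [d, dinv X d] @ B)" using walk_appI[OF wf] ins by blast
  then show ?case using pi1s.ins[of X s x "U@A" B d] ins by simp
qed

lemma pi1s_conj: assumes wf: "wf_graph X" and wP: "walk X x y P" shows "pi1s X s y W \<Longrightarrow> pi1s X s x (P @ W @ rwalk X P)"
proof (induction rule: pi1s.induct)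
  case empty
  have "x \<in> verts X" using walk_verts[OF wP] by simp
  then have "pi1s X s x ([] @ [])" by (simp add: pi1s.empty)
  then show ?case using pi1s_insert[of X s x "[]" "[]" x y P, OF wf _ _ wP] walk_verts[OF wP] by simp
next
  case (gen W y' W0 Q)
  have IH: "pi1s X s x (P @ W @ rwalk X P)" using gen.IH by blast
  have "walk X x y' (P @ W0)" using walk_appI[OF wf wP gen.hyps(2)] .
  then have "pi1s X s x ((P @ W @ rwalk X P) @ (P @ W0) @ Q @ rwalk X (P @ W0))"
    using pi1s.gen[OF IH _ gen.hyps(3,4,5)] by blast
  then have "pi1s X s x ((P @ W) @ rwalk X P @ rwalk X (rwalk X P) @ (W0 @ Q @ rwalk X W0 @ rwalk X P))"
    using rwalk_rwalk[OF wf walk_darts[OF wP]] by (simp add: rwalk_append)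
  then have "pi1s X s x ((P @ W) @ (W0 @ Q @ rwalk X W0 @ rwalk X P))" by (rule pi1s_cancel)
  then show ?case by simp
next
  case (gen_inv W y' W0 Q)
  have IH: "pi1s X s x (P @ W @ rwalk X P)" using gen_inv.IH by blast
  have "walk X x y' (P @ W0)" using walk_appI[OF wf wP gen_inv.hyps(2)] .
  then have "pi1s X s x ((P @ W @ rwalk X P) @ (P @ W0) @ rwalk X Q @ rwalk X (P @ W0))"
    using pi1s.gen_inv[OF IH _ gen_inv.hyps(3,4,5)] by blast
  then have "pi1s X s x ((P @ W) @ rwalk X P @ rwalk X (rwalk X P) @ (W0 @ rwalk X Q @ rwalk X W0 @ rwalk X P))"
    using rwalk_rwalk[OF wf walk_darts[OF wP]] by (simp add: rwalk_append)
  then have "pi1s X s x ((P @ W) @ (W0 @ rwalk X Q @ rwalk X W0 @ rwalk X P))" by (rule pi1s_cancel)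
  then show ?case by simp
next
  case (del A d B)
  then have "pi1s X s x ((P @ A) @ [d, dinv X d] @ (B @ rwalk X P))" by simp
  then show ?case using pi1s.del by fastforce
next
  case (ins A B d)
  have IH: "pi1s X s x ((P @ A) @ (B @ rwalk X P))" using ins.IH by simp
  have "walk X y x (rwalk X P)" using walk_rev[OF wf wP] .
  then have "walk X x x (P @ (A @ [d, dinv X d] @ B) @ rwalk X P)"
    using walk_appI[OF wf wP walk_appI[OF wf ins.hyps(2)]] by blast
  then have "walk X x x ((P @ A) @ [d, dinv X d] @ (B @ rwalk X P))" by simp
  then have "pi1s X s x ((P @ A) @ [d, dinv X d] @ (B @ rwalk X P))" by (rule pi1s.ins[OF IH])
  then show ?case by simp
qed

lemma pi1s_conj_iff: "wf_graph X \<Longrightarrow> walk X x y P \<Longrightarrow> walk X y y W \<Longrightarrow>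
  pi1s X s x (P @ W @ rwalk X P) \<longleftrightarrow> pi1s X s y W"
proof
  assume wf: "wf_graph X" and wP: "walk X x y P" and wW: "walk X y y W" and h: "pi1s X s x (P @ W @ rwalk X P)"
  have "pi1s X s y (rwalk X P @ (P @ W @ rwalk X P) @ rwalk X (rwalk X P))"
    using pi1s_conj[OF wf walk_rev[OF wf wP] h] .
  then have "pi1s X s y ([] @ rwalk X P @ rwalk X (rwalk X P) @ (W @ rwalk X P @ P))"
    using rwalk_rwalk[OF wf walk_darts[OF wP]] by simp
  then have "pi1s X s y (W @ rwalk X P @ rwalk X (rwalk X P) @ [])"
    using pi1s_cancel rwalk_rwalk[OF wf walk_darts[OF wP]] by fastforce
  then show "pi1s X s y W" using pi1s_cancel[of X s y W "rwalk X P" "[]"] by simp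
next
  assume wf: "wf_graph X" and wP: "walk X x y P" and "pi1s X s y W"
  then show "pi1s X s x (P @ W @ rwalk X P)" using pi1s_conj[OF wf wP] by blast
qed

lemma pi1s_mono: "pi1s X s x W \<Longrightarrow> s \<le> t \<Longrightarrow> pi1s X t x W"
proof (induction rule: pi1s.induct)
  case empty then show ?case by (simp add: pi1s.empty)
next
  case (gen W y W0 Q) then show ?case using pi1s.gen[of X t x W y W0 Q] by simp
next
  case (gen_inv W y W0 Q) then show ?case using pi1s.gen_inv[of X t x W y W0 Q] by simp
next
  case (del A d B) then show ?case using pi1s.del[of X t x A d B] by simp
next
  case (ins A B d) then show ?case using pi1s.ins[of X t x A B d] by simp
qed

lemma walk_split_at: assumes wf: "wf_graph X" and w: "walk X x y C" and k: "k < length C"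
  shows "walk X x (orig X (C!k)) (take k C) \<and> walk X (orig X (C!k)) y (drop k C)"
proof -
  have "walk X x y (take k C @ drop k C)" using w by simp
  then obtain m where m1: "walk X x m (take k C)" and m2: "walk X m y (drop k C)" using walk_appE[OF wf] by blast
  have "drop k C \<noteq> []" using k by simp
  then have "orig X (hd (drop k C)) = m" using m2 by (simp add: walk_def)
  moreover have "hd (drop k C) = C!k" using k by (simp add: hd_drop_conv_nth)
  ultimately show ?thesis using m1 m2 by simp
qed

lemma walk_nth_tgt: assumes "walk X x y C" "Suc k < length C"
  shows "tgt X (C!k) = orig X (C!Suc k)"
  using assms by (simp add: walk_def)

lemma simple_cycle: assumes wf: "wf_graph X" and w: "walk X a a C" and ne: "C \<noteq> []"
  and dist: "distinct (map (orig X) C)" and nbt: "\<forall>d. C \<noteq> [d, dinv X d]"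
  shows "cycle_walk X C"
proof -
  define n where "n = length C"
  have n0: "n > 0" using ne by (simp add: n_def)
  define nx where "nx k = (if Suc k < n then Suc k else 0)" for k
  have nx_lt: "nx k < n" for k using n0 by (simp add: nx_def)
  have hd: "orig X (hd C) = a" using w ne by (simp add: walk_def)
  have lst: "tgt X (last C) = a" using w ne by (simp add: walk_def)
  have nxt: "tgt X (C!k) = orig X (C!nx k)" if "k < n" for k
  proof (cases "Suc k < n")
    case True then show ?thesis using walk_nth_tgt[OF w] by (simp add: nx_def n_def)
  next
    case False
    then have "k = n - 1" using that by simp
    then have "C!k = last C" using ne by (simp add: n_def last_conv_nth)
    then show ?thesis using False lst hd ne by (simp add: nx_def hd_conv_nth)
  qed
  have oinj: "k = l" if "k < n" "l < n" "orig X (C!k) = orig X (C!l)" for k l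
    using dist that nth_eq_iff_index_eq[of "map (orig X) C" k l] by (simp add: n_def)
  have darts: "set C \<subseteq> darts X" using walk_darts[OF w] .
  have inv: "dinv X (dinv X d) = d" "orig X (dinv X d) = tgt X d" if "d \<in> darts X" for d
    using wf that by (auto simp: wf_graph_def tgt_def)
  have idx: "C ! i \<noteq> C ! j \<and> C ! i \<noteq> dinv X (C ! j)" if ij: "i < n" "j < n" "i \<noteq> j" for i j
  proof
    show "C ! i \<noteq> C ! j"
    proof
      assume "C ! i = C ! j"
      then have "orig X (C!i) = orig X (C!j)" by simp
      then show False using oinj[OF ij(1,2)] ij(3) by simp
    qed
  next
    show "C ! i \<noteq> dinv X (C ! j)"
    proof
      assume eq: "C ! i = dinv X (C ! j)"
      have ci: "C!i \<in> darts X" "C!j \<in> darts X" using darts ij by (auto simp: n_def)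
      have "orig X (C!i) = tgt X (C!j)" using eq inv ci by simp
      also have "\<dots> = orig X (C! nx j)" using nxt ij by simp
      finally have "orig X (C!i) = orig X (C!nx j)" .
      then have i1: "i = nx j" by (rule oinj[OF ij(1) nx_lt])
      have "orig X (C!j) = orig X (dinv X (C!i))" using eq inv ci by simp
      also have "\<dots> = tgt X (C!i)" using inv ci by simp
      also have "\<dots> = orig X (C! nx i)" using nxt ij by simp
      finally have "orig X (C!j) = orig X (C!nx i)" .
      then have j1: "j = nx i" by (rule oinj[OF ij(2) nx_lt])
      have n2ij: "n = 2 \<and> ((i = 0 \<and> j = 1) \<or> (i = 1 \<and> j = 0))"
      proof (cases "Suc j < n")
        case True
        then have ii: "i = Suc j" using i1 unfolding nx_def by simp
        have jj: "j = nx (Suc j)" using j1 ii by simp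
        show ?thesis
        proof (cases "Suc (Suc j) < n")
          case True
          then have "nx (Suc j) = Suc (Suc j)" unfolding nx_def by simp
          then show ?thesis using jj by simp
        next
          case False
          then have "nx (Suc j) = 0" unfolding nx_def by simp
          then have "j = 0" using jj by simp
          then show ?thesis using ii False ij(1) by simp
        qed
      next
        case False
        then have ii: "i = 0" using i1 unfolding nx_def by simp
        have jj: "j = nx 0" using j1 ii by simp
        show ?thesis
        proof (cases "Suc 0 < n")
          case True
          then have "nx 0 = 1" unfolding nx_def by simp
          then have "j = 1" using jj by simp
          then show ?thesis using ii False ij(2) by simp
        next
          case False
          then have "nx 0 = 0" unfolding nx_def by simp
          then show ?thesis using jj ii ij(3) by simp
        qed
      qed
      then have n2: "n = 2" and ij2: "(i = 0 \<and> j = 1) \<or> (i = 1 \<and> j = 0)" by auto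
      obtain c0 c1 where cc: "C = [c0, c1]" using n2 unfolding n_def
        by (metis One_nat_def length_0_conv length_Suc_conv numeral_2_eq_2)
      then have C2: "C = [C!0, C!1]" by simp
      have "C!1 = dinv X (C!0)"
      proof (cases "i = 0")
        case True
        then have "j = 1" using ij2 by simp
        then show ?thesis using True eq inv(1)[OF ci(2)] by simp
      next
        case False
        then have "i = 1" "j = 0" using ij2 by auto
        then show ?thesis using eq by simp
      qed
      then have "C = [C!0, dinv X (C!0)]" using C2 by simp
      then show False using nbt by blast
    qed
  qed
  show ?thesis unfolding cycle_walk_def
    using ne w hd dist idx by (simp add: n_def)
qed

lemma closed_walk_pi1s: assumes wf: "wf_graph X"
  shows "length C \<le> s \<Longrightarrow> walk X a a C \<Longrightarrow> pi1s X s x (A@B) \<Longrightarrow> walk X x a A \<Longrightarrow> walk X a x B \<Longrightarrow>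
     pi1s X s x (A @ C @ B)"
proof (induction "length C" arbitrary: C A B a rule: less_induct)
  case less
  show ?case
  proof (cases "C = []")
    case True then show ?thesis using less.prems by simp
  next
    case ne: False
    show ?thesis
    proof (cases "distinct (map (orig X) C)")
      case dist: True
      show ?thesis
      proof (cases "\<exists>d. C = [d, dinv X d]")
        case True
        then obtain d where d: "C = [d, dinv X d]" by blast
        have "d \<in> darts X" "orig X d = a" using less.prems(2) d by (auto simp: walk_Cons[OF wf])
        then have "walk X x x (A @ [d, dinv X d] @ B)" using walk_bt_I[OF wf less.prems(4,5)] by blast
        then show ?thesis using pi1s.ins[OF less.prems(3)] d by simp
      next
        case False
        then have cyc: "cycle_walk X C" using simple_cycle[OF wf less.prems(2) ne dist] by blast
        have hd: "orig X (hd C) = a" using less.prems(2) ne by (simp add: walk_def)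
        have x: "x \<in> verts X" using walk_verts[OF less.prems(4)] by simp
        have "pi1s X s x ([] @ A @ C @ rwalk X A)"
          by (rule pi1s.gen[OF pi1s.empty[OF x] less.prems(4) cyc hd less.prems(1)])
        then have "pi1s X s x ((A @ C @ rwalk X A) @ (A @ B))"
          using pi1s_append[OF wf _ less.prems(3)] by (metis append_Nil)
        then have "pi1s X s x ((A @ C) @ rwalk X A @ rwalk X (rwalk X A) @ B)"
          using rwalk_rwalk[OF wf walk_darts[OF less.prems(4)]] by simp
        then show ?thesis using pi1s_cancel by fastforce
      qed
    next
      case nd: False
      obtain i j where ij: "i < j" "j < length C" "orig X (C!i) = orig X (C!j)"
      proof -
        obtain i j where "i < length C" "j < length C" "i \<noteq> j" "orig X (C!i) = orig X (C!j)"
          using nd by (auto simp: distinct_conv_nth)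
        then show ?thesis using that by (metis linorder_neqE_nat)
      qed
      define v where "v = orig X (C!i)"
      define C1 where "C1 = take i C"
      define C2 where "C2 = take (j - i) (drop i C)"
      define C3 where "C3 = drop j C"
      have Ceq: "C = C1 @ C2 @ C3" unfolding C1_def C2_def C3_def
        by (metis append_take_drop_id drop_drop le_add_diff_inverse2 less_imp_le ij(1))
      have s1: "walk X a v C1" "walk X v a (drop i C)"
        using walk_split_at[OF wf less.prems(2), of i] ij by (auto simp: v_def C1_def)
      have "(drop i C) ! (j - i) = C ! j" using ij by simp
      then have s2: "walk X v v C2" "walk X v a C3"
        using walk_split_at[OF wf s1(2), of "j - i"] ij
        by (auto simp: v_def C2_def C3_def)
      have w13: "walk X a a (C1 @ C3)" using walk_appI[OF wf s1(1) s2(2)] .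
      have l13: "length (C1 @ C3) < length C" using ij by (simp add: C1_def C3_def)
      have l2: "length C2 < length C" using ij by (simp add: C2_def)
      have p13: "pi1s X s x (A @ (C1 @ C3) @ B)"
        using less.hyps[OF l13 _ w13 less.prems(3,4,5)] less.prems(1) l13 by simp
      have "pi1s X s x ((A @ C1) @ C2 @ (C3 @ B))"
        using less.hyps[OF l2 _ s2(1), of "A @ C1" "C3 @ B"] p13 less.prems(1) l2
          walk_appI[OF wf less.prems(4) s1(1)] walk_appI[OF wf s2(2) less.prems(5)] by simp
      then show ?thesis using Ceq by simp
    qed
  qed
qed

definition closed_lift :: "('w, 'e) graph \<Rightarrow> ('w, 'e, 'v, 'd) gmap \<Rightarrow> 'w \<Rightarrow> 'd list \<Rightarrow> bool" where
  "closed_lift X' p y' W \<longleftrightarrow> (\<exists>W'. walk X' y' y' W' \<and> map (snd p) W' = W)"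

lemma split3: assumes wf: "wf_graph X'" and w: "walk X' x z V'" and m: "map f V' = A @ B @ C"
  obtains A' B' C' a b where "V' = A' @ B' @ C'" "map f A' = A" "map f B' = B" "map f C' = C"
    "walk X' x a A'" "walk X' a b B'" "walk X' b z C'"
proof -
  obtain A' R' where 1: "V' = A' @ R'" "map f A' = A" "map f R' = B @ C"
    using map_eq_append_conv[THEN iffD1, OF m] by (elim exE conjE) auto
  obtain B' C' where 2: "R' = B' @ C'" "map f B' = B" "map f C' = C"
    using map_eq_append_conv[THEN iffD1, OF 1(3)] by (elim exE conjE) auto
  have "walk X' x z (A' @ R')" using w 1(1) by simp
  then obtain a where a: "walk X' x a A'" "walk X' a z R'" by (rule walk_appE[OF wf])
  have "walk X' a z (B' @ C')" using a(2) 2(1) by simp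
  then obtain b where b: "walk X' a b B'" "walk X' b z C'" by (rule walk_appE[OF wf])
  have "V' = A' @ B' @ C'" using 1(1) 2(1) by simp
  then show ?thesis using that[OF _ 1(2) 2(2) 2(3) a(1) b(1) b(2)] by simp
qed

lemma local_bc: assumes lc: "local_covering s X' p X" and y: "y' \<in> verts X'"
  and wW: "walk X (fst p y') (fst p y') W"
  shows "closed_lift X' p y' W \<longleftrightarrow> pi1s X s (fst p y') W"
proof -
  have c: "covering X' p X" using lc by (simp add: local_covering_def)
  have wf: "wf_graph X'" "wf_graph X" "graph_hom X' p X" using cov_wf[OF c] by auto
  obtain x0 x0' where x0: "x0 \<in> verts X" "x0' \<in> verts X'" "fst p x0' = x0"
    and H: "\<And>W. walk X x0 x0 W \<Longrightarrow> (closed_lift X' p x0' W \<longleftrightarrow> pi1s X s x0 W)"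
    using lc unfolding local_covering_def closed_lift_def by blast
  have "\<exists>P'. walk X' x0' y' P'" using c x0(2) y unfolding covering_def connected_graph_def by blast
  then obtain P' where wP': "walk X' x0' y' P'" by blast
  define P where "P = map (snd p) P'"
  have wP: "walk X x0 (fst p y') P" using hom_walk[OF wf(3,1,2) wP'] x0(3) by (simp add: P_def)
  define V where "V = P @ W @ rwalk X P"
  have wV: "walk X x0 x0 V" unfolding V_def
    using walk_appI[OF wf(2) wP walk_appI[OF wf(2) wW walk_rev[OF wf(2) wP]]] .
  have step1: "closed_lift X' p y' W \<longleftrightarrow> closed_lift X' p x0' V"
  proof
    assume "closed_lift X' p y' W"
    then obtain W' where W': "walk X' y' y' W'" "map (snd p) W' = W" by (auto simp: closed_lift_def)
    have "walk X' x0' x0' (P' @ W' @ rwalk X' P')"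
      using walk_appI[OF wf(1) wP' walk_appI[OF wf(1) W'(1) walk_rev[OF wf(1) wP']]] .
    moreover have "map (snd p) (P' @ W' @ rwalk X' P') = V"
      using W'(2) hom_rwalk[OF wf(3) walk_darts[OF wP']] by (simp add: V_def P_def)
    ultimately show "closed_lift X' p x0' V" by (auto simp: closed_lift_def)
  next
    assume "closed_lift X' p x0' V"
    then obtain V' where V': "walk X' x0' x0' V'" "map (snd p) V' = P @ W @ rwalk X P"
      by (auto simp: closed_lift_def V_def)
    obtain A' B' C' a b where S: "V' = A' @ B' @ C'" "map (snd p) A' = P" "map (snd p) B' = W"
      "map (snd p) C' = rwalk X P" "walk X' x0' a A'" "walk X' a b B'" "walk X' b x0' C'"
      by (rule split3[OF wf(1) V'(1) V'(2)])
    have "A' = P'" using lift_unique[OF c S(5) wP'] S(2) by (simp add: P_def)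
    then have "walk X' x0' a P'" using S(5) by simp
    then have a: "a = y'" using walk_end_unique[OF _ wP'] by blast
    have "map (snd p) (rwalk X' P') = rwalk X P"
      using hom_rwalk[OF wf(3) walk_darts[OF wP']] by (simp add: P_def)
    then have "C' = rwalk X' P'" using lift_unique_end[OF c S(7) walk_rev[OF wf(1) wP']] S(4) by simp
    then have "walk X' b x0' (rwalk X' P')" using S(7) by simp
    then have b: "b = y'" using walk_start_unique[OF _ walk_rev[OF wf(1) wP']] by blast
    show "closed_lift X' p y' W" using S(6) S(3) a b by (auto simp: closed_lift_def)
  qed
  have step2: "pi1s X s x0 V \<longleftrightarrow> pi1s X s (fst p y') W"
    unfolding V_def by (rule pi1s_conj_iff[OF wf(2) wP wW])
  show ?thesis using step1 step2 H[OF wV] by simp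
qed

lemma split2: assumes wf: "wf_graph X'" and w: "walk X' x z V'" and m: "map f V' = A @ B"
  obtains A' B' a where "V' = A' @ B'" "map f A' = A" "map f B' = B"
    "walk X' x a A'" "walk X' a z B'"
proof -
  obtain A' B' where 1: "V' = A' @ B'" "map f A' = A" "map f B' = B"
    using map_eq_append_conv[THEN iffD1, OF m] by (elim exE conjE) auto
  have "walk X' x z (A' @ B')" using w 1(1) by simp
  then obtain a where a: "walk X' x a A'" "walk X' a z B'" by (rule walk_appE[OF wf])
  show ?thesis using that[OF 1 a] .
qed

definition crel where
  "crel X1 p1 x1 X2 p2 x2 v w \<longleftrightarrow> (\<exists>P1 P2. walk X1 x1 v P1 \<and> walk X2 x2 w P2 \<and> map (snd p1) P1 = map (snd p2) P2)"

lemma crel_sym: "crel X1 p1 x1 X2 p2 x2 v w = crel X2 p2 x2 X1 p1 x1 w v"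
  unfolding crel_def by metis

lemma crel_verts: "crel X1 p1 x1 X2 p2 x2 v w \<Longrightarrow> v \<in> verts X1 \<and> w \<in> verts X2"
  unfolding crel_def using walk_verts by metis

lemma crel_proj: assumes c1: "covering X1 p1 X" and c2: "covering X2 p2 X" and e: "fst p1 x1 = fst p2 x2"
  and R: "crel X1 p1 x1 X2 p2 x2 v w" shows "fst p1 v = fst p2 w"
proof -
  obtain P1 P2 where P: "walk X1 x1 v P1" "walk X2 x2 w P2" "map (snd p1) P1 = map (snd p2) P2"
    using R unfolding crel_def by blast
  have h1: "wf_graph X1" "wf_graph X" "graph_hom X1 p1 X" using cov_wf[OF c1] by auto
  have h2: "wf_graph X2" "graph_hom X2 p2 X" using cov_wf[OF c2] by auto
  have 1: "walk X (fst p1 x1) (fst p1 v) (map (snd p1) P1)" using hom_walk[OF h1(3,1,2) P(1)] .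
  have 2: "walk X (fst p1 x1) (fst p2 w) (map (snd p1) P1)" using hom_walk[OF h2(2,1) h1(2) P(2)] e P(3) by simp
  show ?thesis using walk_end_unique[OF 1 2] .
qed

lemma crel_total: assumes c1: "covering X1 p1 X" and c2: "covering X2 p2 X" and e: "fst p1 x1 = fst p2 x2"
  and x1: "x1 \<in> verts X1" and x2: "x2 \<in> verts X2" and v: "v \<in> verts X1"
  shows "\<exists>w. crel X1 p1 x1 X2 p2 x2 v w"
proof -
  have "\<exists>P. walk X1 x1 v P" using c1 x1 v unfolding covering_def connected_graph_def by blast
  then obtain P1 where P1: "walk X1 x1 v P1" by blast
  have h1: "wf_graph X1" "wf_graph X" "graph_hom X1 p1 X" using cov_wf[OF c1] by auto
  have "walk X (fst p2 x2) (fst p1 v) (map (snd p1) P1)" using hom_walk[OF h1(3,1,2) P1] e by simp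
  then obtain P2 w where "walk X2 x2 w P2" "map (snd p2) P2 = map (snd p1) P1"
    using lift_exists[OF c2 x2] by blast
  then show ?thesis using P1 unfolding crel_def by metis
qed

lemma crel_step: assumes c1: "covering X1 p1 X" and c2: "covering X2 p2 X" and e: "fst p1 x1 = fst p2 x2"
  and R: "crel X1 p1 x1 X2 p2 x2 v w" and d: "d \<in> darts X1" "orig X1 d = v"
  shows "crel X1 p1 x1 X2 p2 x2 (tgt X1 d) (tgt X2 (liftd X2 p2 w (snd p1 d)))"
proof -
  have wf1: "wf_graph X1" "graph_hom X1 p1 X" and wf2: "wf_graph X2" using cov_wf[OF c1] cov_wf[OF c2] by auto
  obtain P1 P2 where P: "walk X1 x1 v P1" "walk X2 x2 w P2" "map (snd p1) P1 = map (snd p2) P2"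
    using R unfolding crel_def by blast
  have pw: "fst p1 v = fst p2 w" using crel_proj[OF c1 c2 e R] .
  have pd: "snd p1 d \<in> darts X" "orig X (snd p1 d) = fst p1 v" using wf1(2) d by (auto simp: graph_hom_def)
  define d' where "d' = liftd X2 p2 w (snd p1 d)"
  have w: "w \<in> verts X2" using walk_verts[OF P(2)] by simp
  have d': "d' \<in> darts X2" "orig X2 d' = w" "snd p2 d' = snd p1 d"
    using cov_liftd[OF c2 w pd(1)] pd(2) pw by (auto simp: d'_def)
  have v: "v \<in> verts X1" using walk_verts[OF P(1)] by simp
  have "walk X1 x1 (tgt X1 d) (P1 @ [d])"
    using walk_appI[OF wf1(1) P(1)] d v tgt_in[OF wf1(1) d(1)] by (simp add: walk_Cons[OF wf1(1)])
  moreover have "walk X2 x2 (tgt X2 d') (P2 @ [d'])"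
    using walk_appI[OF wf2 P(2)] d' w tgt_in[OF wf2 d'(1)] by (simp add: walk_Cons[OF wf2])
  moreover have "map (snd p1) (P1 @ [d]) = map (snd p2) (P2 @ [d'])" using P(3) d'(3) by simp
  ultimately show ?thesis unfolding crel_def d'_def by blast
qed

lemma crel_fun: assumes c1: "covering X1 p1 X" and c2: "covering X2 p2 X" and e: "fst p1 x1 = fst p2 x2"
  and H: "\<And>W. walk X (fst p1 x1) (fst p1 x1) W \<Longrightarrow> closed_lift X1 p1 x1 W \<Longrightarrow> closed_lift X2 p2 x2 W"
  and R1: "crel X1 p1 x1 X2 p2 x2 v w" and R2: "crel X1 p1 x1 X2 p2 x2 v w'"
  shows "w = w'"
proof -
  have wf1: "wf_graph X1" "graph_hom X1 p1 X" and wf2: "wf_graph X2" "graph_hom X2 p2 X" and wf: "wf_graph X"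
    using cov_wf[OF c1] cov_wf[OF c2] by auto
  obtain P1 P2 where P: "walk X1 x1 v P1" "walk X2 x2 w P2" "map (snd p1) P1 = map (snd p2) P2"
    using R1 unfolding crel_def by blast
  obtain Q1 Q2 where Q: "walk X1 x1 v Q1" "walk X2 x2 w' Q2" "map (snd p1) Q1 = map (snd p2) Q2"
    using R2 unfolding crel_def by blast
  define U where "U = P1 @ rwalk X1 Q1"
  have wU: "walk X1 x1 x1 U" unfolding U_def using walk_appI[OF wf1(1) P(1) walk_rev[OF wf1(1) Q(1)]] .
  have mU: "map (snd p1) U = map (snd p2) P2 @ rwalk X (map (snd p2) Q2)"
    unfolding U_def using P(3) Q(3) hom_rwalk[OF wf1(2) walk_darts[OF Q(1)]] by simp
  have "walk X (fst p1 x1) (fst p1 x1) (map (snd p1) U)" using hom_walk[OF wf1(2) wf1(1) wf wU] .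
  moreover have "closed_lift X1 p1 x1 (map (snd p1) U)" using wU unfolding closed_lift_def by blast
  ultimately have "closed_lift X2 p2 x2 (map (snd p1) U)" by (rule H)
  then obtain W' where W': "walk X2 x2 x2 W'" "map (snd p2) W' = map (snd p2) P2 @ rwalk X (map (snd p2) Q2)"
    using mU unfolding closed_lift_def by auto
  obtain A' B' a where S: "W' = A' @ B'" "map (snd p2) A' = map (snd p2) P2" "map (snd p2) B' = rwalk X (map (snd p2) Q2)"
    "walk X2 x2 a A'" "walk X2 a x2 B'" by (rule split2[OF wf2(1) W'(1) W'(2)])
  have "A' = P2" using lift_unique[OF c2 S(4) P(2) S(2)] .
  then have a: "a = w" using walk_end_unique[OF S(4)] P(2) by simp
  have "map (snd p2) B' = map (snd p2) (rwalk X2 Q2)" using S(3) hom_rwalk[OF wf2(2) walk_darts[OF Q(2)]] by simp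
  then have "B' = rwalk X2 Q2" using lift_unique_end[OF c2 S(5) walk_rev[OF wf2(1) Q(2)]] by simp
  then have "walk X2 a x2 (rwalk X2 Q2)" using S(5) by simp
  then have "a = w'" using walk_start_unique[OF _ walk_rev[OF wf2(1) Q(2)]] by blast
  then show ?thesis using a by simp
qed

lemma equiv_cov: assumes c1: "covering X1 p1 X" and c2: "covering X2 p2 X" and e: "fst p1 x1 = fst p2 x2"
  and x1: "x1 \<in> verts X1" and x2: "x2 \<in> verts X2"
  and H: "\<And>W. walk X (fst p1 x1) (fst p1 x1) W \<Longrightarrow> closed_lift X1 p1 x1 W \<longleftrightarrow> closed_lift X2 p2 x2 W"
  shows "equivalent_coverings X1 p1 X2 p2"
proof -
  have h1: "wf_graph X1" "wf_graph X" "graph_hom X1 p1 X" using cov_wf[OF c1] by auto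
  have h2: "wf_graph X2" "graph_hom X2 p2 X" using cov_wf[OF c2] by auto
  let ?R = "crel X1 p1 x1 X2 p2 x2"
  have fn: "w = w'" if "?R v w" "?R v w'" for v w w'
    using crel_fun[OF c1 c2 e _ that] H by blast
  have inj: "v = v'" if "?R v w" "?R v' w" for v v' w
  proof -
    have "crel X2 p2 x2 X1 p1 x1 w v" "crel X2 p2 x2 X1 p1 x1 w v'" using that crel_sym by metis+
    moreover have "\<And>W. walk X (fst p2 x2) (fst p2 x2) W \<Longrightarrow> closed_lift X2 p2 x2 W \<Longrightarrow> closed_lift X1 p1 x1 W"
      using H e by simp
    ultimately show ?thesis using crel_fun[OF c2 c1 e[symmetric]] by blast
  qed
  define hv where "hv v = (THE w. ?R v w)" for v
  have hvR: "?R v (hv v)" if vv: "v \<in> verts X1" for v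
  proof -
    obtain w where w: "?R v w" using crel_total[OF c1 c2 e x1 x2 vv] by blast
    have "?R v (THE w. ?R v w)" by (rule theI[of "?R v" w]) (use w fn in blast)+
    then show ?thesis by (simp add: hv_def)
  qed
  have hv_eq: "hv v = w" if "?R v w" for v w
  proof -
    have "v \<in> verts X1" using crel_verts[OF that] by simp
    then show ?thesis using hvR fn that by blast
  qed
  define hd where "hd d = liftd X2 p2 (hv (orig X1 d)) (snd p1 d)" for d
  have ov: "orig X1 d \<in> verts X1" if "d \<in> darts X1" for d using h1(1) that by (simp add: wf_graph_def)
  have hdP: "hd d \<in> darts X2 \<and> orig X2 (hd d) = hv (orig X1 d) \<and> snd p2 (hd d) = snd p1 d"
    if d: "d \<in> darts X1" for d
  proof -
    have R: "?R (orig X1 d) (hv (orig X1 d))" using hvR[OF ov[OF d]] .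
    have "fst p1 (orig X1 d) = fst p2 (hv (orig X1 d))" using crel_proj[OF c1 c2 e R] .
    moreover have "snd p1 d \<in> darts X" "orig X (snd p1 d) = fst p1 (orig X1 d)" using h1(3) d by (auto simp: graph_hom_def)
    moreover have "hv (orig X1 d) \<in> verts X2" using crel_verts[OF R] by simp
    ultimately show ?thesis using cov_liftd[OF c2, of "hv (orig X1 d)" "snd p1 d"] by (simp add: hd_def)
  qed
  have hv_tgt: "hv (tgt X1 d) = tgt X2 (hd d)" if d: "d \<in> darts X1" for d
  proof -
    have "?R (tgt X1 d) (tgt X2 (liftd X2 p2 (hv (orig X1 d)) (snd p1 d)))"
      using crel_step[OF c1 c2 e hvR[OF ov[OF d]] d] by simp
    then show ?thesis using hv_eq by (simp add: hd_def)
  qed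
  have hd_dinv: "hd (dinv X1 d) = dinv X2 (hd d)" if d: "d \<in> darts X1" for d
  proof -
    have dd: "dinv X1 d \<in> darts X1" "orig X1 (dinv X1 d) = tgt X1 d" using h1(1) d by (auto simp: wf_graph_def tgt_def)
    have P: "hd d \<in> darts X2" "orig X2 (hd d) = hv (orig X1 d)" "snd p2 (hd d) = snd p1 d" using hdP[OF d] by auto
    have "snd p1 (dinv X1 d) = dinv X (snd p1 d)" using h1(3) d by (simp add: graph_hom_def)
    also have "\<dots> = dinv X (snd p2 (hd d))" using P by simp
    also have "\<dots> = snd p2 (dinv X2 (hd d))" using h2(2) P(1) by (simp add: graph_hom_def)
    finally have 1: "snd p1 (dinv X1 d) = snd p2 (dinv X2 (hd d))" .
    have 2: "hv (orig X1 (dinv X1 d)) = orig X2 (dinv X2 (hd d))" using dd hv_tgt[OF d] by (simp add: tgt_def)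
    have "dinv X2 (hd d) \<in> darts X2" using h2(1) P(1) by (simp add: wf_graph_def)
    then have "liftd X2 p2 (orig X2 (dinv X2 (hd d))) (snd p2 (dinv X2 (hd d))) = dinv X2 (hd d)"
      by (rule cov_liftd_unique[OF c2])
    then show ?thesis using 1 2 by (simp add: hd_def)
  qed
  have hvv: "hv v \<in> verts X2" if "v \<in> verts X1" for v using crel_verts[OF hvR[OF that]] by simp
  have hom: "graph_hom X1 (hv, hd) X2"
    unfolding graph_hom_def using hdP hd_dinv hvv by auto
  have bv: "bij_betw hv (verts X1) (verts X2)"
  proof (rule bij_betw_imageI)
    show "inj_on hv (verts X1)"
    proof (rule inj_onI)
      fix v v' assume v: "v \<in> verts X1" "v' \<in> verts X1" "hv v = hv v'"
      then show "v = v'" using hvR[OF v(1)] hvR[OF v(2)] inj by metis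
    qed
    show "hv ` verts X1 = verts X2"
    proof
      show "hv ` verts X1 \<subseteq> verts X2" using hvv by blast
      show "verts X2 \<subseteq> hv ` verts X1"
      proof
        fix w assume w: "w \<in> verts X2"
        obtain v where "crel X2 p2 x2 X1 p1 x1 w v" using crel_total[OF c2 c1 e[symmetric] x2 x1 w] by blast
        then have R: "?R v w" using crel_sym by metis
        then have "hv v = w" by (rule hv_eq)
        then show "w \<in> hv ` verts X1" using crel_verts[OF R] by blast
      qed
    qed
  qed
  have bd: "bij_betw hd (darts X1) (darts X2)"
  proof (rule bij_betw_imageI)
    show "inj_on hd (darts X1)"
    proof (rule inj_onI)
      fix d d' assume d: "d \<in> darts X1" "d' \<in> darts X1" "hd d = hd d'"
      have "hv (orig X1 d) = hv (orig X1 d')" using hdP[OF d(1)] hdP[OF d(2)] d(3) by metis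
      then have o: "orig X1 d = orig X1 d'" using bv ov[OF d(1)] ov[OF d(2)] by (metis bij_betw_def inj_onD)
      have "snd p1 d = snd p1 d'" using hdP[OF d(1)] hdP[OF d(2)] d(3) by metis
      then show "d = d'" using cov_inj_at[OF c1 d(1) d(2) o] by simp
    qed
    show "hd ` darts X1 = darts X2"
    proof
      show "hd ` darts X1 \<subseteq> darts X2" using hdP by blast
      show "darts X2 \<subseteq> hd ` darts X1"
      proof
        fix f assume f: "f \<in> darts X2"
        have ow: "orig X2 f \<in> verts X2" using h2(1) f by (simp add: wf_graph_def)
        then obtain v where v: "v \<in> verts X1" "hv v = orig X2 f" using bv by (metis bij_betw_def imageE)
        have R: "?R v (orig X2 f)" using hvR[OF v(1)] v(2) by simp
        have pv: "fst p1 v = fst p2 (orig X2 f)" using crel_proj[OF c1 c2 e R] .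
        have pf: "snd p2 f \<in> darts X" "orig X (snd p2 f) = fst p2 (orig X2 f)" using h2(2) f by (auto simp: graph_hom_def)
        define d where "d = liftd X1 p1 v (snd p2 f)"
        have d: "d \<in> darts X1" "orig X1 d = v" "snd p1 d = snd p2 f"
          using cov_liftd[OF c1 v(1) pf(1)] pf(2) pv by (auto simp: d_def)
        have "hd d = liftd X2 p2 (orig X2 f) (snd p2 f)" using d v(2) by (simp add: hd_def)
        also have "\<dots> = f" by (rule cov_liftd_unique[OF c2 f])
        finally show "f \<in> hd ` darts X1" using d(1) by blast
      qed
    qed
  qed
  have cv: "\<forall>v\<in>verts X1. fst p2 (hv v) = fst p1 v" using crel_proj[OF c1 c2 e] hvR by metis
  have cd: "\<forall>d\<in>darts X1. snd p2 (hd d) = snd p1 d" using hdP by blast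
  show ?thesis unfolding equivalent_coverings_def graph_iso_def
    using hom bv bd cv cd by (intro exI[of _ "(hv, hd)"]) simp
qed

lemma cycle_lift: assumes c: "covering Y p X" and cyc: "cycle_walk X Q" and w: "walk Y y y Q'"
  and m: "map (snd p) Q' = Q" shows "cycle_walk Y Q'"
proof -
  have h: "wf_graph Y" "wf_graph X" "graph_hom Y p X" using cov_wf[OF c] by auto
  have ne: "Q' \<noteq> []" using cyc m by (auto simp: cycle_walk_def)
  have hd: "orig Y (hd Q') = y" using w ne by (simp add: walk_def)
  have ds: "set Q' \<subseteq> darts Y" using walk_darts[OF w] .
  have om: "map (fst p) (map (orig Y) Q') = map (orig X) Q"
    using ds h(3) m unfolding graph_hom_def by (auto intro!: map_cong) (metis subsetD)
  have "distinct (map (orig X) Q)" using cyc by (simp add: cycle_walk_def)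
  then have dist: "distinct (map (orig Y) Q')" using om distinct_map by metis
  have idx: "Q' ! i \<noteq> Q' ! j \<and> Q' ! i \<noteq> dinv Y (Q' ! j)"
    if ij: "i < length Q'" "j < length Q'" "i \<noteq> j" for i j
  proof -
    have l: "length Q = length Q'" using m by auto
    have q: "Q ! i \<noteq> Q ! j" "Q ! i \<noteq> dinv X (Q ! j)" using cyc ij l unfolding cycle_walk_def by auto
    have qi: "Q ! i = snd p (Q' ! i)" "Q ! j = snd p (Q' ! j)" using m ij by auto
    have dj: "Q' ! j \<in> darts Y" using ds ij by auto
    have "snd p (dinv Y (Q' ! j)) = dinv X (Q ! j)" using h(3) dj qi by (simp add: graph_hom_def)
    then show ?thesis using q qi by metis
  qed
  show ?thesis unfolding cycle_walk_def using ne w hd dist idx by simp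
qed

lemma pi1s_down: assumes c: "covering Y p X"
  shows "pi1s Y s z W \<Longrightarrow> pi1s X s (fst p z) (map (snd p) W)"
proof (induction rule: pi1s.induct)
  have h: "wf_graph Y" "wf_graph X" "graph_hom Y p X" using cov_wf[OF c] by auto
  {
    case empty then show ?case using h(3) by (simp add: graph_hom_def pi1s.empty)
  next
    case (gen W y W0 Q)
    have wW0: "walk X (fst p z) (fst p y) (map (snd p) W0)" using hom_walk[OF h(3,1,2) gen.hyps(2)] .
    have wQ: "walk Y y y Q" using gen.hyps(3,4) by (simp add: cycle_walk_def)
    have wQ': "walk X (fst p y) (fst p y) (map (snd p) Q)" using hom_walk[OF h(3,1,2) wQ] .
    have py: "fst p y \<in> verts X" using walk_verts[OF wQ'] by simp
    have "pi1s X s (fst p y) ([] @ map (snd p) Q @ [])"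
      using closed_walk_pi1s[OF h(2), of "map (snd p) Q" s "fst p y" "fst p y" "[]" "[]"] gen.hyps(5) wQ' py
      by (simp add: pi1s.empty)
    then have "pi1s X s (fst p z) (map (snd p) W0 @ map (snd p) Q @ rwalk X (map (snd p) W0))"
      using pi1s_conj[OF h(2) wW0] by simp
    then have "pi1s X s (fst p z) (map (snd p) W @ map (snd p) W0 @ map (snd p) Q @ rwalk X (map (snd p) W0))"
      using pi1s_append[OF h(2) gen.IH] by simp
    then show ?case using hom_rwalk[OF h(3) walk_darts[OF gen.hyps(2)]] by simp
  next
    case (gen_inv W y W0 Q)
    have wW0: "walk X (fst p z) (fst p y) (map (snd p) W0)" using hom_walk[OF h(3,1,2) gen_inv.hyps(2)] .
    have wQ: "walk Y y y Q" using gen_inv.hyps(3,4) by (simp add: cycle_walk_def)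
    have wQ': "walk X (fst p y) (fst p y) (map (snd p) (rwalk Y Q))" using hom_walk[OF h(3,1,2) walk_rev[OF h(1) wQ]] .
    have py: "fst p y \<in> verts X" using walk_verts[OF wQ'] by simp
    have "pi1s X s (fst p y) ([] @ map (snd p) (rwalk Y Q) @ [])"
      using closed_walk_pi1s[OF h(2), of "map (snd p) (rwalk Y Q)" s "fst p y" "fst p y" "[]" "[]"] gen_inv.hyps(5) wQ' py
      by (simp add: pi1s.empty)
    then have "pi1s X s (fst p z) (map (snd p) W0 @ map (snd p) (rwalk Y Q) @ rwalk X (map (snd p) W0))"
      using pi1s_conj[OF h(2) wW0] by simp
    then have "pi1s X s (fst p z) (map (snd p) W @ map (snd p) W0 @ map (snd p) (rwalk Y Q) @ rwalk X (map (snd p) W0))"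
      using pi1s_append[OF h(2) gen_inv.IH] by simp
    then show ?case using hom_rwalk[OF h(3) walk_darts[OF gen_inv.hyps(2)]] by simp
  next
    case (del A d B)
    have "walk Y z z (A @ [d, dinv Y d] @ B)" using pi1s_walk[OF h(1) del.hyps] .
    then have d: "d \<in> darts Y" using walk_bt_E[OF h(1)] by blast
    have "snd p (dinv Y d) = dinv X (snd p d)" using h(3) d by (simp add: graph_hom_def)
    then have "pi1s X s (fst p z) (map (snd p) A @ [snd p d, dinv X (snd p d)] @ map (snd p) B)"
      using del.IH by simp
    then show ?case using pi1s.del by fastforce
  next
    case (ins A B d)
    have d: "d \<in> darts Y" using walk_bt_E[OF h(1) ins.hyps(2)] by blast
    have e: "snd p (dinv Y d) = dinv X (snd p d)" using h(3) d by (simp add: graph_hom_def)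
    have "walk X (fst p z) (fst p z) (map (snd p) (A @ [d, dinv Y d] @ B))" using hom_walk[OF h(3,1,2) ins.hyps(2)] .
    then have "walk X (fst p z) (fst p z) (map (snd p) A @ [snd p d, dinv X (snd p d)] @ map (snd p) B)" using e by simp
    moreover have "pi1s X s (fst p z) (map (snd p) A @ map (snd p) B)" using ins.IH by simp
    ultimately have "pi1s X s (fst p z) (map (snd p) A @ [snd p d, dinv X (snd p d)] @ map (snd p) B)"
      using pi1s.ins[of X s "fst p z" "map (snd p) A" "map (snd p) B" "snd p d"] by blast
    then show ?case using e by simp
  }
qed

lemma pi1s_up: assumes lc: "local_covering r' Y p X" and rr: "r \<le> r'" and z: "z \<in> verts Y"
  and x0: "fst p z = x0"
  shows "pi1s X r x0 V \<Longrightarrow> \<exists>V'. walk Y z z V' \<and> map (snd p) V' = V \<and> pi1s Y r z V'"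
proof (induction rule: pi1s.induct)
  have c: "covering Y p X" using lc by (simp add: local_covering_def)
  have h: "wf_graph Y" "wf_graph X" "graph_hom Y p X" using cov_wf[OF c] by auto
  have cyclift: "\<exists>W0' Q' y'. walk Y z y' W0' \<and> map (snd p) W0' = W0 \<and> walk Y y' y' Q' \<and> map (snd p) Q' = Q
     \<and> cycle_walk Y Q' \<and> orig Y (hd Q') = y' \<and> length Q' \<le> r"
    if W0: "walk X x0 y W0" and cyc: "cycle_walk X Q" and hq: "orig X (hd Q) = y" and lq: "length Q \<le> r" for W0 y Q
  proof -
    obtain W0' y' where A: "walk Y z y' W0'" "map (snd p) W0' = W0" "fst p y' = y"
      using lift_exists[OF c z] W0 x0 by blast
    have wQ: "walk X y y Q" using cyc hq by (simp add: cycle_walk_def)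
    have y': "y' \<in> verts Y" using walk_verts[OF A(1)] by simp
    obtain Q' e where B: "walk Y y' e Q'" "map (snd p) Q' = Q" "fst p e = y"
      using lift_exists[OF c y'] wQ A(3) by blast
    have x0v: "x0 \<in> verts X" using walk_verts[OF W0] by simp
    have "pi1s X r' x0 ([] @ W0 @ Q @ rwalk X W0)"
      by (rule pi1s.gen[OF pi1s.empty[OF x0v] W0 cyc hq]) (use lq rr in simp)
    then have pU: "pi1s X r' (fst p z) (W0 @ Q @ rwalk X W0)" using x0 by simp
    have "walk X (fst p z) (fst p z) (W0 @ Q @ rwalk X W0)" using pi1s_walk[OF h(2) pU] .
    then have "closed_lift Y p z (W0 @ Q @ rwalk X W0)" using local_bc[OF lc z] pU by blast
    then obtain U' where U': "walk Y z z U'" "map (snd p) U' = W0 @ Q @ rwalk X W0"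
      unfolding closed_lift_def by blast
    obtain A' B' C' a b where S: "U' = A' @ B' @ C'" "map (snd p) A' = W0" "map (snd p) B' = Q"
      "map (snd p) C' = rwalk X W0" "walk Y z a A'" "walk Y a b B'" "walk Y b z C'"
      by (rule split3[OF h(1) U'(1) U'(2)])
    have "A' = W0'" using lift_unique[OF c S(5) A(1)] S(2) A(2) by simp
    then have a: "a = y'" using walk_end_unique[OF S(5)] A(1) by simp
    have "B' = Q'" using lift_unique[OF c _ B(1)] S(6) S(3) B(2) a by simp
    then have b: "b = e" using walk_end_unique[OF S(6)] B(1) a by simp
    have "map (snd p) (rwalk Y W0') = rwalk X W0" using hom_rwalk[OF h(3) walk_darts[OF A(1)]] A(2) by simp
    then have "C' = rwalk Y W0'" using lift_unique_end[OF c S(7) walk_rev[OF h(1) A(1)]] S(4) by simp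
    then have "walk Y b z (rwalk Y W0')" using S(7) by simp
    then have "e = y'" using walk_start_unique[OF _ walk_rev[OF h(1) A(1)]] b by simp
    then have wQ': "walk Y y' y' Q'" using B(1) by simp
    have cQ: "cycle_walk Y Q'" using cycle_lift[OF c cyc wQ' B(2)] .
    have "Q' \<noteq> []" using cQ by (simp add: cycle_walk_def)
    then have "orig Y (hd Q') = y'" using wQ' by (simp add: walk_def)
    moreover have "length Q' \<le> r" using B(2) lq by auto
    ultimately show ?thesis using A(1,2) wQ' B(2) cQ by blast
  qed
  {
    case empty then show ?case using z by (intro exI[of _ "[]"]) (simp add: pi1s.empty)
  next
    case (gen W y W0 Q)
    obtain W' where W': "walk Y z z W'" "map (snd p) W' = W" "pi1s Y r z W'" using gen.IH by blast
    obtain W0' Q' y' where L: "walk Y z y' W0'" "map (snd p) W0' = W0" "walk Y y' y' Q'" "map (snd p) Q' = Q"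
       "cycle_walk Y Q'" "orig Y (hd Q') = y'" "length Q' \<le> r"
      using cyclift[OF gen.hyps(2-5)] by blast
    have P: "pi1s Y r z (W' @ W0' @ Q' @ rwalk Y W0')" by (rule pi1s.gen[OF W'(3) L(1) L(5) L(6) L(7)])
    have "map (snd p) (W' @ W0' @ Q' @ rwalk Y W0') = W @ W0 @ Q @ rwalk X W0"
      using W'(2) L(2,4) hom_rwalk[OF h(3) walk_darts[OF L(1)]] by simp
    then show ?case using P pi1s_walk[OF h(1) P] by blast
  next
    case (gen_inv W y W0 Q)
    obtain W' where W': "walk Y z z W'" "map (snd p) W' = W" "pi1s Y r z W'" using gen_inv.IH by blast
    obtain W0' Q' y' where L: "walk Y z y' W0'" "map (snd p) W0' = W0" "walk Y y' y' Q'" "map (snd p) Q' = Q"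
       "cycle_walk Y Q'" "orig Y (hd Q') = y'" "length Q' \<le> r"
      using cyclift[OF gen_inv.hyps(2-5)] by blast
    have P: "pi1s Y r z (W' @ W0' @ rwalk Y Q' @ rwalk Y W0')" by (rule pi1s.gen_inv[OF W'(3) L(1) L(5) L(6) L(7)])
    have "map (snd p) (W' @ W0' @ rwalk Y Q' @ rwalk Y W0') = W @ W0 @ rwalk X Q @ rwalk X W0"
      using W'(2) L(2,4) hom_rwalk[OF h(3) walk_darts[OF L(1)]] hom_rwalk[OF h(3) walk_darts[OF L(3)]] by simp
    then show ?case using P pi1s_walk[OF h(1) P] by blast
  next
    case (del A d B)
    obtain V' where V': "walk Y z z V'" "map (snd p) V' = A @ [d, dinv X d] @ B" "pi1s Y r z V'" using del.IH by blast
    obtain A' D' B' a b where S: "V' = A' @ D' @ B'" "map (snd p) A' = A" "map (snd p) D' = [d, dinv X d]"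
      "map (snd p) B' = B" "walk Y z a A'" "walk Y a b D'" "walk Y b z B'"
      by (rule split3[OF h(1) V'(1) V'(2)])
    obtain d1 d2 where D: "D' = [d1, d2]" using S(3) by (auto simp: map_eq_Cons_conv)
    have d1: "d1 \<in> darts Y" "orig Y d1 = a" and wd2: "walk Y (tgt Y d1) b [d2]" using S(6) D by (auto simp: walk_Cons[OF h(1)])
    have d2: "d2 \<in> darts Y" "orig Y d2 = tgt Y d1" using wd2 by (auto simp: walk_Cons[OF h(1)])
    have pd: "snd p d1 = d" "snd p d2 = dinv X d" using S(3) D by auto
    have id1: "dinv Y d1 \<in> darts Y" "orig Y (dinv Y d1) = tgt Y d1" using h(1) d1 by (auto simp: wf_graph_def tgt_def)
    have "snd p (dinv Y d1) = dinv X (snd p d1)" using h(3) d1 by (simp add: graph_hom_def)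
    then have "d2 = dinv Y d1" using cov_inj_at[OF c d2(1) id1(1)] d2(2) id1(2) pd by simp
    then have "pi1s Y r z (A' @ [d1, dinv Y d1] @ B')" using V'(3) S(1) D by simp
    then have P: "pi1s Y r z (A' @ B')" by (rule pi1s.del)
    have "map (snd p) (A' @ B') = A @ B" using S by simp
    then show ?case using P pi1s_walk[OF h(1) P] by blast
  next
    case (ins A B d)
    obtain V' where V': "walk Y z z V'" "map (snd p) V' = A @ B" "pi1s Y r z V'" using ins.IH by blast
    obtain A' B' a where S: "V' = A' @ B'" "map (snd p) A' = A" "map (snd p) B' = B"
      "walk Y z a A'" "walk Y a z B'" by (rule split2[OF h(1) V'(1) V'(2)])
    obtain a0 where E: "walk X x0 a0 A" "walk X a0 x0 B" "d \<in> darts X" "orig X d = a0"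
      using walk_bt_E[OF h(2) ins.hyps(2)] by blast
    have "walk X x0 (fst p a) A" using hom_walk[OF h(3,1,2) S(4)] S(2) x0 by simp
    then have pa: "fst p a = orig X d" using walk_end_unique E(1) E(4) by metis
    have av: "a \<in> verts Y" using walk_verts[OF S(4)] by simp
    define d1 where "d1 = liftd Y p a d"
    have d1: "d1 \<in> darts Y" "orig Y d1 = a" "snd p d1 = d" using cov_liftd[OF c av E(3)] pa by (auto simp: d1_def)
    have w: "walk Y z z (A' @ [d1, dinv Y d1] @ B')" by (rule walk_bt_I[OF h(1) S(4) S(5) d1(1,2)])
    have "pi1s Y r z (A' @ B')" using V'(3) S(1) by simp
    then have P: "pi1s Y r z (A' @ [d1, dinv Y d1] @ B')" using w by (rule pi1s.ins)
    have "snd p (dinv Y d1) = dinv X d" using h(3) d1 by (simp add: graph_hom_def)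
    then have "map (snd p) (A' @ [d1, dinv Y d1] @ B') = A @ [d, dinv X d] @ B" using S d1 by simp
    then show ?case using P w by blast
  }
qed

theorem lemma4p5:
  fixes G :: "('v, 'd) graph"
    and Gr :: "('v1, 'd1) graph" and Grr :: "('v2, 'd2) graph" and H :: "('v3, 'd3) graph"
    and pr :: "('v1, 'd1, 'v, 'd) gmap" and prr :: "('v2, 'd2, 'v, 'd) gmap"
    and q :: "('v1, 'd1, 'v2, 'd2) gmap" and p_rr :: "('v3, 'd3, 'v2, 'd2) gmap"
    and r r' :: nat
  assumes "wf_graph G" and "connected_graph G" and "r \<le> r'"
    and "local_covering r Gr pr G"
    and "local_covering r' Grr prr G"
    and "covering Gr q Grr"
    and "\<forall>v\<in>verts Gr. fst pr v = fst prr (fst q v)"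
    and "\<forall>d\<in>darts Gr. snd pr d = snd prr (snd q d)"
    and "local_covering r H p_rr Grr"
  shows "equivalent_coverings H p_rr Gr q
       \<and> equivalent_coverings Gr pr H (gcomp prr p_rr)
       \<and> isomorphic_graphs H Gr"
proof -
  note rr = assms(3) and lcr = assms(4) and lcr' = assms(5) and cq = assms(6)
    and cv = assms(7) and cd = assms(8) and lcH = assms(9)
  have cH: "covering H p_rr Grr" using lcH by (simp add: local_covering_def)
  have cr: "covering Gr pr G" using lcr by (simp add: local_covering_def)
  have crr: "covering Grr prr G" using lcr' by (simp add: local_covering_def)
  have hq: "wf_graph Gr" "wf_graph Grr" "graph_hom Gr q Grr" using cov_wf[OF cq] by auto
  have hrr: "wf_graph G" "graph_hom Grr prr G" using cov_wf[OF crr] by auto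
  obtain z0 z0' where z: "z0 \<in> verts Grr" "z0' \<in> verts H" "fst p_rr z0' = z0"
    and HH: "\<And>W. walk Grr z0 z0 W \<Longrightarrow> (closed_lift H p_rr z0' W \<longleftrightarrow> pi1s Grr r z0 W)"
    using lcH unfolding local_covering_def closed_lift_def by blast
  have "z0 \<in> fst q ` verts Gr" using cq z(1) unfolding covering_def by simp
  then obtain x2 where x2: "x2 \<in> verts Gr" "fst q x2 = z0" by (metis imageE)
  have K: "closed_lift Gr q x2 W \<longleftrightarrow> pi1s Grr r z0 W" if wW: "walk Grr z0 z0 W" for W
  proof -
    define g0 where "g0 = fst prr z0"
    have pg: "fst pr x2 = g0" using cv x2 by (simp add: g0_def)
    have wm: "walk G g0 g0 (map (snd prr) W)" using hom_walk[OF hrr(2) hq(2) hrr(1) wW] by (simp add: g0_def)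
    have A: "closed_lift Gr q x2 W \<longleftrightarrow> closed_lift Gr pr x2 (map (snd prr) W)"
    proof
      assume "closed_lift Gr q x2 W"
      then obtain W' where W': "walk Gr x2 x2 W'" "map (snd q) W' = W" by (auto simp: closed_lift_def)
      have "map (snd pr) W' = map (snd prr) (map (snd q) W')"
        using walk_darts[OF W'(1)] cd by (auto intro!: map_cong)
      then show "closed_lift Gr pr x2 (map (snd prr) W)" using W' by (auto simp: closed_lift_def)
    next
      assume "closed_lift Gr pr x2 (map (snd prr) W)"
      then obtain V' where V': "walk Gr x2 x2 V'" "map (snd pr) V' = map (snd prr) W" by (auto simp: closed_lift_def)
      have wq: "walk Grr z0 z0 (map (snd q) V')" using hom_walk[OF hq(3,1,2) V'(1)] x2 by simp
      have "map (snd pr) V' = map (snd prr) (map (snd q) V')"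
        using walk_darts[OF V'(1)] cd by (auto intro!: map_cong)
      then have "map (snd q) V' = W" using lift_unique[OF crr wq wW] V'(2) by simp
      then show "closed_lift Gr q x2 W" using V'(1) by (auto simp: closed_lift_def)
    qed
    have B: "closed_lift Gr pr x2 (map (snd prr) W) \<longleftrightarrow> pi1s G r g0 (map (snd prr) W)"
      using local_bc[OF lcr x2(1)] wm pg by simp
    have C: "pi1s G r g0 (map (snd prr) W) \<longleftrightarrow> pi1s Grr r z0 W"
    proof
      assume "pi1s G r g0 (map (snd prr) W)"
      then obtain V' where V': "walk Grr z0 z0 V'" "map (snd prr) V' = map (snd prr) W" "pi1s Grr r z0 V'"
        using pi1s_up[OF lcr' rr z(1) g0_def[symmetric]] by blast
      have "V' = W" using lift_unique[OF crr V'(1) wW V'(2)] .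
      then show "pi1s Grr r z0 W" using V'(3) by simp
    next
      assume "pi1s Grr r z0 W"
      then show "pi1s G r g0 (map (snd prr) W)" using pi1s_down[OF crr] by (simp add: g0_def)
    qed
    show ?thesis using A B C by simp
  qed
  have Hyp: "closed_lift H p_rr z0' W \<longleftrightarrow> closed_lift Gr q x2 W" if "walk Grr (fst p_rr z0') (fst p_rr z0') W" for W
    using HH K that z(3) by simp
  have E1: "equivalent_coverings H p_rr Gr q"
    by (rule equiv_cov[OF cH cq _ z(2) x2(1)]) (use z(3) x2(2) Hyp in auto)
  have E2: "equivalent_coverings Gr q H p_rr"
    by (rule equiv_cov[OF cq cH _ x2(1) z(2)]) (use z(3) x2(2) Hyp in auto)
  then obtain h where h: "graph_iso Gr h H" "\<forall>v\<in>verts Gr. fst p_rr (fst h v) = fst q v"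
    "\<forall>d\<in>darts Gr. snd p_rr (snd h d) = snd q d" unfolding equivalent_coverings_def by blast
  have E3: "equivalent_coverings Gr pr H (gcomp prr p_rr)"
    unfolding equivalent_coverings_def gcomp_def using h cv cd by (intro exI[of _ h]) auto
  have E4: "isomorphic_graphs H Gr" using E1 unfolding equivalent_coverings_def isomorphic_graphs_def by blast
  show ?thesis using E1 E3 E4 by blast
qed


end
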